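(* Let $k\in L^1(0,\infty)$ be a probability density with $k(t)=t^rf(t)$, where $r>-1$, $f(0)\neq0$ and $f'(0)$ exists. Let $(X_n)$ be independent random variables each with density $k$, and $S_n=X_1+\dots+X_n$. Then $$\mathbf{P}(S_n\le1)\sim\frac{(f(0)\Gamma(r+1))^ne^{f'(0)/f(0)}}{\Gamma((r+1)n+1)}\quad\text{as }n\to\infty.$$
   Context: $a_n\sim b_n$ means $a_n/b_n\to1$. *)

theory Defs
  imports "HOL-Probability.Probability" "HOL-Library.Landau_Symbols"
begin

end

theory Submission
  imports Defs "HOL-Real_Asymp.Real_Asymp"
begin

primrec Ik :: "(real \<Rightarrow> ennreal) \<Rightarrow> nat \<Rightarrow> real \<Rightarrow> ennreal" where
  "Ik h 0 = (\<lambda>s. indicator {0..} s)"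
| "Ik h (Suc n) = (\<lambda>s. \<integral>\<^sup>+y. h y * Ik h n (s - y) \<partial>lborel)"

lemma Ik_measurable[measurable]:
  assumes [measurable]: "h \<in> borel_measurable borel"
  shows "Ik h n \<in> borel_measurable borel"
proof (induction n)
  case 0 then show ?case by simp
next
  case (Suc n)
  note [measurable] = Suc
  show ?case by simp measurable
qed

lemma Ik_mono_s:
  "s \<le> s' \<Longrightarrow> Ik h n s \<le> Ik h n s'"
proof (induction n arbitrary: s s')
  case 0 then show ?case by (auto simp: indicator_def)
next
  case (Suc n)
  show ?case using Suc by (auto intro!: nn_integral_mono mult_left_mono)
qed

lemma Ik_neg:
  assumes "\<And>y. y \<le> 0 \<Longrightarrow> h y = 0" "s < 0"
  shows "Ik h n s = 0"
  using assms(2)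
proof (induction n arbitrary: s)
  case 0 then show ?case by simp
next
  case (Suc n)
  have "\<And>y. h y * Ik h n (s - y) = 0"
  proof -
    fix y show "h y * Ik h n (s - y) = 0"
      using Suc.IH[of "s - y"] Suc.prems by (cases "y \<le> 0") (auto simp: assms(1))
  qed
  then show ?case by (simp del: mult_eq_0_iff)
qed

lemma Ik_mono_h:
  assumes "\<And>y. h y \<le> h' y"
  shows "Ik h n s \<le> Ik h' n s"
proof (induction n arbitrary: s)
  case 0 then show ?case by simp
next
  case (Suc n)
  show ?case using Suc assms by (auto intro!: nn_integral_mono mult_mono)
qed

lemma Ik_chernoff:
  assumes "l \<ge> 0" and [measurable]: "h \<in> borel_measurable borel"
  shows "Ik h n s \<le> ennreal (exp (l * s)) * (\<integral>\<^sup>+y. h y * ennreal (exp (-l * y)) \<partial>lborel) ^ n"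
proof (induction n arbitrary: s)
  case 0 then show ?case using assms by (auto simp: indicator_def)
next
  case (Suc n)
  let ?P = "(\<integral>\<^sup>+y. h y * ennreal (exp (-l * y)) \<partial>lborel)"
  have "Ik h (Suc n) s \<le> (\<integral>\<^sup>+y. h y * (ennreal (exp (l * (s - y))) * ?P ^ n) \<partial>lborel)"
    using Suc by (auto intro!: nn_integral_mono mult_left_mono)
  also have "\<dots> = (\<integral>\<^sup>+y. (ennreal (exp (l * s)) * ?P ^ n) * (h y * ennreal (exp (-l * y))) \<partial>lborel)"
  proof (intro nn_integral_cong)
    fix y
    have "ennreal (exp (l * (s - y))) = ennreal (exp (l * s)) * ennreal (exp (-l * y))"
      by (simp add: ennreal_mult' [symmetric] exp_add [symmetric] algebra_simps)
    then show "h y * (ennreal (exp (l * (s - y))) * ?P ^ n) = (ennreal (exp (l * s)) * ?P ^ n) * (h y * ennreal (exp (-l * y)))"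
      by (simp add: mult_ac)
  qed
  also have "\<dots> = ennreal (exp (l * s)) * ?P ^ n * ?P"
    by (subst nn_integral_cmult) auto
  finally show ?case by (simp add: mult_ac)
qed

lemma tail_part:
  fixes F :: "real \<Rightarrow> ennreal"
  assumes Fm: "\<And>u v. u \<le> v \<Longrightarrow> F u \<le> F v" and F0: "\<And>u. u < 0 \<Longrightarrow> F u = 0" and "s \<le> 1"
    and [measurable]: "h \<in> borel_measurable borel"
  shows "(\<integral>\<^sup>+y. h y * indicator {\<delta>..} y * F (s - y) \<partial>lborel)
         \<le> (\<integral>\<^sup>+y. h y * indicator {\<delta>..1} y \<partial>lborel) * F (s - \<delta>)"
proof -
  have "(\<integral>\<^sup>+y. h y * indicator {\<delta>..} y * F (s - y) \<partial>lborel)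
        \<le> (\<integral>\<^sup>+y. h y * indicator {\<delta>..1} y * F (s - \<delta>) \<partial>lborel)"
  proof (intro nn_integral_mono)
    fix y
    show "h y * indicator {\<delta>..} y * F (s - y) \<le> h y * indicator {\<delta>..1} y * F (s - \<delta>)"
    proof (cases "y < \<delta>")
      case True then show ?thesis by (simp add: indicator_def)
    next
      case False
      show ?thesis
      proof (cases "y > s")
        case True then show ?thesis using F0[of "s - y"] by simp
      next
        case False
        with \<open>\<not> y < \<delta>\<close> \<open>s \<le> 1\<close> show ?thesis
          by (auto simp: indicator_def intro!: mult_left_mono Fm)
      qed
    qed
  qed
  also have "\<dots> = (\<integral>\<^sup>+y. h y * indicator {\<delta>..1} y \<partial>lborel) * F (s - \<delta>)"
    by (rule nn_integral_multc) measurable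
  finally show ?thesis .
qed

lemma Ik_split:
  assumes hm[measurable]: "h \<in> borel_measurable borel" and supp: "\<And>y. y \<le> 0 \<Longrightarrow> h y = 0"
  shows "s \<le> 1 \<Longrightarrow> Ik h (Suc n) s \<le> Ik (\<lambda>y. h y * indicator {..<\<delta>} y) (Suc n) s
            + of_nat (Suc n) * (\<integral>\<^sup>+y. h y * indicator {\<delta>..1} y \<partial>lborel) * Ik h n (s - \<delta>)"
proof (induction n arbitrary: s)
  let ?h1 = "\<lambda>y. h y * indicator {..<\<delta>} y"
  let ?K = "(\<integral>\<^sup>+y. h y * indicator {\<delta>..1} y \<partial>lborel)"
  have split: "(\<integral>\<^sup>+y. h y * F (s - y) \<partial>lborel) = (\<integral>\<^sup>+y. ?h1 y * F (s - y) \<partial>lborel)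
        + (\<integral>\<^sup>+y. h y * indicator {\<delta>..} y * F (s - y) \<partial>lborel)"
    if [measurable]: "F \<in> borel_measurable borel" for F s
  proof -
    have "(\<integral>\<^sup>+y. h y * F (s - y) \<partial>lborel) = (\<integral>\<^sup>+y. ?h1 y * F (s - y) + h y * indicator {\<delta>..} y * F (s - y) \<partial>lborel)"
      by (intro nn_integral_cong) (auto simp: indicator_def)
    also have "\<dots> = (\<integral>\<^sup>+y. ?h1 y * F (s - y) \<partial>lborel) + (\<integral>\<^sup>+y. h y * indicator {\<delta>..} y * F (s - y) \<partial>lborel)"
      by (rule nn_integral_add) measurable
    finally show ?thesis .
  qed
  have mono: "\<And>m u v. u \<le> v \<Longrightarrow> Ik h m u \<le> Ik h m v" by (rule Ik_mono_s)
  have neg: "\<And>m u. u < 0 \<Longrightarrow> Ik h m u = 0" using supp by (rule Ik_neg)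
  {
    case 0
    have "Ik h (Suc 0) s = Ik ?h1 (Suc 0) s + (\<integral>\<^sup>+y. h y * indicator {\<delta>..} y * Ik h 0 (s - y) \<partial>lborel)"
      using split[of "Ik h 0" s] by simp
    also have "\<dots> \<le> Ik ?h1 (Suc 0) s + ?K * Ik h 0 (s - \<delta>)"
      using tail_part[where F="Ik h 0" and s=s and h=h and \<delta>=\<delta>, OF mono neg 0 hm] by (intro add_left_mono) auto
    finally show ?case by simp
  next
    case (Suc n)
    have "Ik h (Suc (Suc n)) s = (\<integral>\<^sup>+y. ?h1 y * Ik h (Suc n) (s - y) \<partial>lborel)
         + (\<integral>\<^sup>+y. h y * indicator {\<delta>..} y * Ik h (Suc n) (s - y) \<partial>lborel)"
      using split[of "Ik h (Suc n)" s] by simp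
    also have "\<dots> \<le> (\<integral>\<^sup>+y. ?h1 y * (Ik ?h1 (Suc n) (s - y) + of_nat (Suc n) * ?K * Ik h n (s - y - \<delta>)) \<partial>lborel)
         + ?K * Ik h (Suc n) (s - \<delta>)"
    proof (intro add_mono tail_part[where F="Ik h (Suc n)" and s=s and h=h and \<delta>=\<delta>, OF mono neg Suc.prems hm] nn_integral_mono)
      fix y
      show "?h1 y * Ik h (Suc n) (s - y) \<le> ?h1 y * (Ik ?h1 (Suc n) (s - y) + of_nat (Suc n) * ?K * Ik h n (s - y - \<delta>))"
      proof (cases "y \<le> 0")
        case True then show ?thesis by (simp add: supp)
      next
        case False
        then show ?thesis using Suc.prems by (intro mult_left_mono Suc.IH) auto
      qed
    qed auto
    also have "(\<integral>\<^sup>+y. ?h1 y * (Ik ?h1 (Suc n) (s - y) + of_nat (Suc n) * ?K * Ik h n (s - y - \<delta>)) \<partial>lborel)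
       = Ik ?h1 (Suc (Suc n)) s + of_nat (Suc n) * ?K * (\<integral>\<^sup>+y. ?h1 y * Ik h n (s - \<delta> - y) \<partial>lborel)"
    proof -
      have "(\<integral>\<^sup>+y. ?h1 y * (Ik ?h1 (Suc n) (s - y) + of_nat (Suc n) * ?K * Ik h n (s - y - \<delta>)) \<partial>lborel)
         = (\<integral>\<^sup>+y. ?h1 y * Ik ?h1 (Suc n) (s - y) + of_nat (Suc n) * ?K * (?h1 y * Ik h n (s - \<delta> - y)) \<partial>lborel)"
        by (intro nn_integral_cong) (simp add: distrib_left mult_ac diff_diff_eq add.commute)
      also have "\<dots> = (\<integral>\<^sup>+y. ?h1 y * Ik ?h1 (Suc n) (s - y) \<partial>lborel) + (\<integral>\<^sup>+y. of_nat (Suc n) * ?K * (?h1 y * Ik h n (s - \<delta> - y)) \<partial>lborel)"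
        by (rule nn_integral_add) measurable
      also have "(\<integral>\<^sup>+y. of_nat (Suc n) * ?K * (?h1 y * Ik h n (s - \<delta> - y)) \<partial>lborel) = of_nat (Suc n) * ?K * (\<integral>\<^sup>+y. ?h1 y * Ik h n (s - \<delta> - y) \<partial>lborel)"
        by (rule nn_integral_cmult) measurable
      finally show ?thesis by simp
    qed
    also have "(\<integral>\<^sup>+y. ?h1 y * Ik h n (s - \<delta> - y) \<partial>lborel) \<le> Ik h (Suc n) (s - \<delta>)"
      by (simp, intro nn_integral_mono mult_right_mono) (auto simp: indicator_def)
    finally have "Ik h (Suc (Suc n)) s \<le> Ik ?h1 (Suc (Suc n)) s + of_nat (Suc n) * ?K * Ik h (Suc n) (s - \<delta>) + ?K * Ik h (Suc n) (s - \<delta>)"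
      by (simp add: add_mono mult_left_mono)
    also have "\<dots> = Ik ?h1 (Suc (Suc n)) s + of_nat (Suc (Suc n)) * ?K * Ik h (Suc n) (s - \<delta>)"
    proof -
      have "of_nat (Suc (Suc n)) * ?K * Ik h (Suc n) (s - \<delta>) = of_nat (Suc n) * ?K * Ik h (Suc n) (s - \<delta>) + ?K * Ik h (Suc n) (s - \<delta>)"
        by (simp only: of_nat_Suc[of "Suc n"] distrib_right mult_1_left add.commute)
      then show ?thesis by (simp only: add.assoc)
    qed
    finally show ?case .
  }
qed

lemma ennreal_exp_mult: "ennreal (exp u) * ennreal (exp v) = ennreal (exp (u + v))"
  by (simp add: ennreal_mult' [symmetric] exp_add)

lemma Ik_tilt_upper:
  assumes pm[measurable]: "p \<in> borel_measurable borel" and supp: "\<And>y. y \<le> 0 \<Longrightarrow> p y = 0"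
    and "\<epsilon> \<ge> 0"
  shows "Ik (\<lambda>y. p y * ennreal (exp (a * y))) n s
     \<le> ennreal (exp (a * s + \<bar>a\<bar> * \<epsilon>)) * Ik p n s + ennreal (exp (\<bar>a\<bar> * s)) * Ik p n (s - \<epsilon>)"
proof (induction n arbitrary: s)
  case 0
  show ?case
  proof (cases "s < 0")
    case True then show ?thesis by simp
  next
    case False
    show ?thesis
    proof (cases "s \<ge> \<epsilon>")
      case True
      have "1 \<le> ennreal (exp (\<bar>a\<bar> * s))" using False by simp
      with True False show ?thesis by (simp add: indicator_def add_increasing)
    next
      case False2: False
      have "a * s + \<bar>a\<bar> * \<epsilon> \<ge> 0"
      proof -
        have "a * s \<ge> - \<bar>a\<bar> * s" using False by (cases "a \<ge> 0") auto
        moreover have "\<bar>a\<bar> * s \<le> \<bar>a\<bar> * \<epsilon>" using False2 by (intro mult_left_mono) auto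
        ultimately show ?thesis by linarith
      qed
      then have "1 \<le> ennreal (exp (a * s + \<bar>a\<bar> * \<epsilon>))" by simp
      with False show ?thesis by (simp add: indicator_def add_increasing2)
    qed
  qed
next
  case (Suc n)
  let ?g = "\<lambda>y. p y * ennreal (exp (a * y))"
  have "Ik ?g (Suc n) s \<le> (\<integral>\<^sup>+y. ?g y * (ennreal (exp (a * (s - y) + \<bar>a\<bar> * \<epsilon>)) * Ik p n (s - y)
           + ennreal (exp (\<bar>a\<bar> * (s - y))) * Ik p n (s - y - \<epsilon>)) \<partial>lborel)"
    using Suc by (auto intro!: nn_integral_mono mult_left_mono)
  also have "\<dots> \<le> (\<integral>\<^sup>+y. ennreal (exp (a * s + \<bar>a\<bar> * \<epsilon>)) * (p y * Ik p n (s - y))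
           + ennreal (exp (\<bar>a\<bar> * s)) * (p y * Ik p n (s - \<epsilon> - y)) \<partial>lborel)"
  proof (intro nn_integral_mono)
    fix y
    show "?g y * (ennreal (exp (a * (s - y) + \<bar>a\<bar> * \<epsilon>)) * Ik p n (s - y)
           + ennreal (exp (\<bar>a\<bar> * (s - y))) * Ik p n (s - y - \<epsilon>))
        \<le> ennreal (exp (a * s + \<bar>a\<bar> * \<epsilon>)) * (p y * Ik p n (s - y))
           + ennreal (exp (\<bar>a\<bar> * s)) * (p y * Ik p n (s - \<epsilon> - y))"
    proof (cases "y \<le> 0")
      case True then show ?thesis by (simp add: supp)
    next
      case False
      have e1: "ennreal (exp (a * y)) * ennreal (exp (a * (s - y) + \<bar>a\<bar> * \<epsilon>)) = ennreal (exp (a * s + \<bar>a\<bar> * \<epsilon>))"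
        by (simp add: ennreal_exp_mult algebra_simps)
      have "a * y \<le> \<bar>a\<bar> * y" using False by (intro mult_right_mono) auto
      then have "a * y + \<bar>a\<bar> * (s - y) \<le> \<bar>a\<bar> * s"
        by (simp add: algebra_simps)
      then have e2: "ennreal (exp (a * y)) * ennreal (exp (\<bar>a\<bar> * (s - y))) \<le> ennreal (exp (\<bar>a\<bar> * s))"
        by (simp add: ennreal_exp_mult)
      have "?g y * (ennreal (exp (a * (s - y) + \<bar>a\<bar> * \<epsilon>)) * Ik p n (s - y)
           + ennreal (exp (\<bar>a\<bar> * (s - y))) * Ik p n (s - y - \<epsilon>))
          = (ennreal (exp (a * y)) * ennreal (exp (a * (s - y) + \<bar>a\<bar> * \<epsilon>))) * (p y * Ik p n (s - y))
           + (ennreal (exp (a * y)) * ennreal (exp (\<bar>a\<bar> * (s - y)))) * (p y * Ik p n (s - \<epsilon> - y))"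
        by (simp add: distrib_left mult_ac diff_diff_eq add.commute)
      also have "\<dots> \<le> ennreal (exp (a * s + \<bar>a\<bar> * \<epsilon>)) * (p y * Ik p n (s - y))
           + ennreal (exp (\<bar>a\<bar> * s)) * (p y * Ik p n (s - \<epsilon> - y))"
        unfolding e1 by (intro add_left_mono mult_right_mono e2) auto
      finally show ?thesis .
    qed
  qed
  also have "\<dots> = ennreal (exp (a * s + \<bar>a\<bar> * \<epsilon>)) * Ik p (Suc n) s + ennreal (exp (\<bar>a\<bar> * s)) * Ik p (Suc n) (s - \<epsilon>)"
    by (simp add: nn_integral_add nn_integral_cmult)
  finally show ?case .
qed

lemma Ik_tilt_lower:
  assumes pm[measurable]: "p \<in> borel_measurable borel" and supp: "\<And>y. y \<le> 0 \<Longrightarrow> p y = 0"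
    and "\<epsilon> \<ge> 0"
  shows "ennreal (exp (a * s - \<bar>a\<bar> * \<epsilon>)) * Ik p n s
     \<le> Ik (\<lambda>y. p y * ennreal (exp (a * y))) n s + ennreal (exp (\<bar>a\<bar> * s)) * Ik p n (s - \<epsilon>)"
proof (induction n arbitrary: s)
  case 0
  show ?case
  proof (cases "s < 0")
    case True then show ?thesis by simp
  next
    case False
    show ?thesis
    proof (cases "s \<ge> \<epsilon>")
      case True
      have "a * s - \<bar>a\<bar> * \<epsilon> \<le> \<bar>a\<bar> * s"
      proof -
        have "a * s \<le> \<bar>a\<bar> * s" using False by (intro mult_right_mono) auto
        moreover have "\<bar>a\<bar> * \<epsilon> \<ge> 0" using \<open>\<epsilon> \<ge> 0\<close> by simp
        ultimately show ?thesis by linarith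
      qed
      then have "ennreal (exp (a * s - \<bar>a\<bar> * \<epsilon>)) \<le> ennreal (exp (\<bar>a\<bar> * s))" by simp
      with True False show ?thesis by (simp add: indicator_def add_increasing)
    next
      case False2: False
      have "a * s - \<bar>a\<bar> * \<epsilon> \<le> 0"
      proof -
        have "a * s \<le> \<bar>a\<bar> * s" using False by (intro mult_right_mono) auto
        moreover have "\<bar>a\<bar> * s \<le> \<bar>a\<bar> * \<epsilon>" using False2 by (intro mult_left_mono) auto
        ultimately show ?thesis by linarith
      qed
      then have "ennreal (exp (a * s - \<bar>a\<bar> * \<epsilon>)) \<le> 1" by simp
      with False False2 show ?thesis by (simp add: indicator_def)
    qed
  qed
next
  case (Suc n)
  let ?g = "\<lambda>y. p y * ennreal (exp (a * y))"
  have "ennreal (exp (a * s - \<bar>a\<bar> * \<epsilon>)) * Ik p (Suc n) s = (\<integral>\<^sup>+y. ennreal (exp (a * y)) * p y * (ennreal (exp (a * (s - y) - \<bar>a\<bar> * \<epsilon>)) * Ik p n (s - y)) \<partial>lborel)"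
    apply (simp flip: nn_integral_cmult)
    apply (intro nn_integral_cong)
    apply (simp add: mult_ac ennreal_exp_mult)
    apply (simp add: algebra_simps)
    done
  also have "\<dots> \<le> (\<integral>\<^sup>+y. ennreal (exp (a * y)) * p y * (Ik ?g n (s - y)
           + ennreal (exp (\<bar>a\<bar> * (s - y))) * Ik p n (s - y - \<epsilon>)) \<partial>lborel)"
    using Suc by (auto intro!: nn_integral_mono mult_left_mono)
  also have "\<dots> \<le> (\<integral>\<^sup>+y. ?g y * Ik ?g n (s - y)
           + ennreal (exp (\<bar>a\<bar> * s)) * (p y * Ik p n (s - \<epsilon> - y)) \<partial>lborel)"
  proof (intro nn_integral_mono)
    fix y
    show "ennreal (exp (a * y)) * p y * (Ik ?g n (s - y)
           + ennreal (exp (\<bar>a\<bar> * (s - y))) * Ik p n (s - y - \<epsilon>))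
        \<le> ?g y * Ik ?g n (s - y)
           + ennreal (exp (\<bar>a\<bar> * s)) * (p y * Ik p n (s - \<epsilon> - y))"
    proof (cases "y \<le> 0")
      case True then show ?thesis by (simp add: supp)
    next
      case False
      have "a * y \<le> \<bar>a\<bar> * y" using False by (intro mult_right_mono) auto
      then have "a * y + \<bar>a\<bar> * (s - y) \<le> \<bar>a\<bar> * s"
        by (simp add: algebra_simps)
      then have e2: "ennreal (exp (a * y)) * ennreal (exp (\<bar>a\<bar> * (s - y))) \<le> ennreal (exp (\<bar>a\<bar> * s))"
        by (simp add: ennreal_exp_mult)
      have "ennreal (exp (a * y)) * p y * (Ik ?g n (s - y)
           + ennreal (exp (\<bar>a\<bar> * (s - y))) * Ik p n (s - y - \<epsilon>))
          = ?g y * Ik ?g n (s - y)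
           + (ennreal (exp (a * y)) * ennreal (exp (\<bar>a\<bar> * (s - y)))) * (p y * Ik p n (s - \<epsilon> - y))"
        by (simp add: distrib_left mult_ac diff_diff_eq add.commute)
      also have "\<dots> \<le> ?g y * Ik ?g n (s - y)
           + ennreal (exp (\<bar>a\<bar> * s)) * (p y * Ik p n (s - \<epsilon> - y))"
        by (intro add_left_mono mult_right_mono e2) auto
      finally show ?thesis .
    qed
  qed
  also have "\<dots> = Ik ?g (Suc n) s + ennreal (exp (\<bar>a\<bar> * s)) * Ik p (Suc n) (s - \<epsilon>)"
    by (simp add: nn_integral_add nn_integral_cmult)
  finally show ?case .
qed

lemma beta_scaled:
  fixes s \<alpha> b :: real
  assumes "s > 0" "\<alpha> > 0" "b > 0"
  shows "(\<integral>\<^sup>+y. ennreal (indicator {0<..<s} y * (y powr (\<alpha> - 1) * (s - y) powr (b - 1))) \<partial>lborel)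
         = ennreal (s powr (\<alpha> + b - 1) * Beta \<alpha> b)"
proof -
  have hi: "((\<lambda>t. t powr (\<alpha> - 1) * (1 - t) powr (b - 1)) has_integral Beta \<alpha> b) {0<..<1}"
    using has_integral_Beta_real[OF assms(2,3)] by (simp add: has_integral_Icc_iff_Ioo)
  have B1: "(\<integral>\<^sup>+t. ennreal (indicator {0<..<1} t * (t powr (\<alpha> - 1) * (1 - t) powr (b - 1))) \<partial>lborel) = ennreal (Beta \<alpha> b)"
    using nn_integral_has_integral_lebesgue[OF _ hi] by simp
  have "(\<integral>\<^sup>+y. ennreal (indicator {0<..<s} y * (y powr (\<alpha> - 1) * (s - y) powr (b - 1))) \<partial>lborel)
      = ennreal \<bar>s\<bar> * (\<integral>\<^sup>+t. ennreal (indicator {0<..<s} (0 + s * t) * ((0 + s * t) powr (\<alpha> - 1) * (s - (0 + s * t)) powr (b - 1))) \<partial>lborel)"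
    using assms by (intro nn_integral_real_affine) auto
  also have "(\<integral>\<^sup>+t. ennreal (indicator {0<..<s} (0 + s * t) * ((0 + s * t) powr (\<alpha> - 1) * (s - (0 + s * t)) powr (b - 1))) \<partial>lborel)
      = (\<integral>\<^sup>+t. ennreal (s powr (\<alpha> + b - 2)) * ennreal (indicator {0<..<1} t * (t powr (\<alpha> - 1) * (1 - t) powr (b - 1))) \<partial>lborel)"
  proof (intro nn_integral_cong)
    fix t :: real
    show "ennreal (indicator {0<..<s} (0 + s * t) * ((0 + s * t) powr (\<alpha> - 1) * (s - (0 + s * t)) powr (b - 1)))
       = ennreal (s powr (\<alpha> + b - 2)) * ennreal (indicator {0<..<1} t * (t powr (\<alpha> - 1) * (1 - t) powr (b - 1)))"
    proof (cases "0 < t \<and> t < 1")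
      case True
      have "s - s * t = s * (1 - t)" by (simp add: algebra_simps)
      moreover have "s powr (\<alpha> - 1) * s powr (b - 1) = s powr (\<alpha> + b - 2)"
        by (simp add: powr_add [symmetric])
      ultimately show ?thesis using True assms
        by (simp add: powr_mult ennreal_mult' [symmetric] mult_ac)
    next
      case False
      then have "\<not> (0 < s * t \<and> s * t < s)" using assms
        by (auto simp: mult_less_cancel_left1 zero_less_mult_iff)
      then have "indicator {0<..<s} (0 + s * t) = (0::real)" by (simp add: indicator_def)
      moreover have "indicator {0<..<1} t = (0::real)" using False by (simp add: indicator_def)
      ultimately show ?thesis by simp
    qed
  qed
  also have "\<dots> = ennreal (s powr (\<alpha> + b - 2)) * ennreal (Beta \<alpha> b)"
    by (subst nn_integral_cmult) (auto simp: B1)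
  also have "s * s powr (\<alpha> + b - 2) = s powr (\<alpha> + b - 1)"
    using assms by (simp add: powr_add [symmetric] powr_mult_base)
  hence "ennreal \<bar>s\<bar> * (ennreal (s powr (\<alpha> + b - 2)) * ennreal (Beta \<alpha> b)) = ennreal (s powr (\<alpha> + b - 1) * Beta \<alpha> b)"
    using assms by (simp add: ennreal_mult' [symmetric] mult.assoc [symmetric] Beta_def)
  finally show ?thesis .
qed

definition pk :: "real \<Rightarrow> real \<Rightarrow> real \<Rightarrow> ennreal" where
  "pk f0 r y = (if 0 < y then ennreal (f0 * y powr r) else 0)"

definition Pf :: "real \<Rightarrow> real \<Rightarrow> nat \<Rightarrow> real \<Rightarrow> real" where
  "Pf f0 r n s = (if n = 0 then indicator {0..} s else if s \<le> 0 then 0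
      else (f0 * Gamma (r + 1)) ^ n * s powr ((r + 1) * real n) / Gamma ((r + 1) * real n + 1))"

lemma pk_measurable[measurable]: "pk f0 r \<in> borel_measurable borel"
  unfolding pk_def by measurable

lemma pk_supp: "y \<le> 0 \<Longrightarrow> pk f0 r y = 0"
  by (simp add: pk_def)

lemma Pf_pos: "s > 0 \<Longrightarrow> Pf f0 r n s = (f0 * Gamma (r + 1)) ^ n * s powr ((r + 1) * real n) / Gamma ((r + 1) * real n + 1)"
  by (simp add: Pf_def)

lemma Ik_pk:
  assumes f0: "f0 > 0" and r: "r > -1"
  shows "Ik (pk f0 r) n s = ennreal (Pf f0 r n s)"
proof (induction n arbitrary: s)
  case 0 then show ?case by (simp add: Pf_def indicator_def)
next
  case (Suc n)
  define A where "A = f0 * Gamma (r + 1)"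
  define C where "C = f0 * A ^ n / Gamma ((r + 1) * real n + 1)"
  have rn: "(r + 1) * real n \<ge> 0" using r by simp
  have Gpos: "Gamma ((r + 1) * real n + 1) > 0" using rn by (intro Gamma_real_pos) linarith
  have Apos: "A > 0" using f0 r by (simp add: A_def Gamma_real_pos)
  have Cpos: "C \<ge> 0" using f0 Apos Gpos by (simp add: C_def)
  have eq: "Ik (pk f0 r) (Suc n) s = (\<integral>\<^sup>+y. pk f0 r y * ennreal (Pf f0 r n (s - y)) \<partial>lborel)"
    using Suc by simp
  show ?case
  proof (cases "s \<le> 0")
    case True
    have z: "\<And>y. pk f0 r y * ennreal (Pf f0 r n (s - y)) = 0"
      using True by (auto simp: pk_def Pf_def indicator_def)
    have "(\<integral>\<^sup>+y. pk f0 r y * ennreal (Pf f0 r n (s - y)) \<partial>lborel) = 0"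
      unfolding z by simp
    then show ?thesis using True by (simp only: eq) (simp add: Pf_def)
  next
    case False
    then have s: "s > 0" by simp
    have "(\<integral>\<^sup>+y. pk f0 r y * ennreal (Pf f0 r n (s - y)) \<partial>lborel)
        = (\<integral>\<^sup>+y. ennreal C * ennreal (indicator {0<..<s} y * (y powr ((r + 1) - 1) * (s - y) powr (((r + 1) * real n + 1) - 1))) \<partial>lborel)"
    proof (intro nn_integral_cong_AE eventually_mono[OF AE_lborel_singleton[of s]])
      fix y assume "y \<noteq> s"
      show "pk f0 r y * ennreal (Pf f0 r n (s - y)) = ennreal C * ennreal (indicator {0<..<s} y * (y powr ((r + 1) - 1) * (s - y) powr (((r + 1) * real n + 1) - 1)))"
      proof (cases "0 < y \<and> y < s")
        case True
        have "Pf f0 r n (s - y) = A ^ n * (s - y) powr ((r + 1) * real n) / Gamma ((r + 1) * real n + 1)"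
          using True by (simp add: Pf_pos A_def)
        then have "pk f0 r y * ennreal (Pf f0 r n (s - y)) = ennreal (f0 * y powr r * (A ^ n * (s - y) powr ((r + 1) * real n) / Gamma ((r + 1) * real n + 1)))"
          using True f0 by (simp add: pk_def ennreal_mult' [symmetric])
        also have "f0 * y powr r * (A ^ n * (s - y) powr ((r + 1) * real n) / Gamma ((r + 1) * real n + 1))
            = C * (indicator {0<..<s} y * (y powr ((r + 1) - 1) * (s - y) powr (((r + 1) * real n + 1) - 1)))"
          using True by (simp add: C_def)
        finally show ?thesis using Cpos by (simp add: ennreal_mult' [symmetric])
      next
        case False
        then have "y \<le> 0 \<or> y > s" using \<open>y \<noteq> s\<close> by auto
        then show ?thesis
        proof
          assume "y \<le> 0" then show ?thesis using False by (simp add: pk_def indicator_def)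
        next
          assume "y > s" then show ?thesis using False by (simp add: Pf_def indicator_def)
        qed
      qed
    qed
    also have "\<dots> = ennreal C * ennreal (s powr ((r + 1) + ((r + 1) * real n + 1) - 1) * Beta (r + 1) ((r + 1) * real n + 1))"
    proof -
      have bs: "(\<integral>\<^sup>+y. ennreal (indicator {0<..<s} y * (y powr ((r + 1) - 1) * (s - y) powr (((r + 1) * real n + 1) - 1))) \<partial>lborel)
         = ennreal (s powr ((r + 1) + ((r + 1) * real n + 1) - 1) * Beta (r + 1) ((r + 1) * real n + 1))"
        by (rule beta_scaled) (use s r rn in linarith)+
      show ?thesis using bs by (simp add: nn_integral_cmult)
    qed
    also have "\<dots> = ennreal (Pf f0 r (Suc n) s)"
    proof -
      have "Gamma ((r + 1) * real n + 1 + (r + 1)) = Gamma ((r + 1) * real (Suc n) + 1)"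
        by (simp add: algebra_simps)
      then have "C * (s powr ((r + 1) + ((r + 1) * real n + 1) - 1) * Beta (r + 1) ((r + 1) * real n + 1))
          = Pf f0 r (Suc n) s"
        using s Gpos by (simp add: Pf_pos C_def A_def Beta_def field_simps add_ac)
      then show ?thesis using Cpos by (simp add: ennreal_mult' [symmetric])
    qed
    finally show ?thesis by (simp only: eq)
  qed
qed

lemma (in prob_space) prob_Ik:
  fixes X :: "nat \<Rightarrow> 'a \<Rightarrow> real"
  assumes ind: "indep_vars (\<lambda>_. borel) X UNIV"
    and distr: "\<And>i. distributed M lborel (X i) dens"
  shows "emeasure M {\<omega> \<in> space M. (\<Sum>i\<in>{1..n}. X i \<omega>) \<le> s} = Ik dens n s"
proof (induction n arbitrary: s)
  case 0
  show ?case by (cases "0 \<le> s") (auto simp: emeasure_space_1)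
next
  case (Suc n)
  have dm[measurable]: "dens \<in> borel_measurable borel"
    using distributed_borel_measurable[OF distr[of 0]] by simp
  have Xm[measurable]: "\<And>i. X i \<in> borel_measurable M"
    using distributed_measurable[OF distr] by simp
  define S where "S = (\<lambda>\<omega>. \<Sum>i\<in>{1..n}. X i \<omega>)"
  have Sm[measurable]: "S \<in> borel_measurable M" unfolding S_def by measurable
  have indep: "indep_var borel (X (Suc n)) borel S"
    unfolding S_def
    by (rule indep_vars_sum) (auto intro: indep_vars_subset[OF ind])
  have sumeq: "\<And>\<omega>. (\<Sum>i\<in>{1..Suc n}. X i \<omega>) = X (Suc n) \<omega> + S \<omega>"
    by (simp add: S_def add.commute)
  have "emeasure M {\<omega> \<in> space M. (\<Sum>i\<in>{1..Suc n}. X i \<omega>) \<le> s}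
      = emeasure (distr M borel (\<lambda>\<omega>. X (Suc n) \<omega> + S \<omega>)) {..s}"
  proof -
    have set: "{\<omega> \<in> space M. (\<Sum>i\<in>{1..Suc n}. X i \<omega>) \<le> s} = (\<lambda>\<omega>. X (Suc n) \<omega> + S \<omega>) -` {..s} \<inter> space M"
      by (auto simp: S_def add.commute)
    have "(\<lambda>\<omega>. X (Suc n) \<omega> + S \<omega>) \<in> measurable M borel" by measurable
    then show ?thesis using set emeasure_distr[of "\<lambda>\<omega>. X (Suc n) \<omega> + S \<omega>" M borel "{..s}"] by simp
  qed
  also have "\<dots> = emeasure (distr M borel (X (Suc n)) \<star> distr M borel S) {..s}"
    by (subst sum_indep_random_variable[OF indep]) auto
  also have "\<dots> = (\<integral>\<^sup>+x. emeasure (distr M borel S) {a. a + x \<in> {..s}} \<partial>distr M borel (X (Suc n)))"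
    by (rule convolution_emeasure) (auto intro!: prob_space.finite_measure prob_space_distr)
  also have "\<dots> = (\<integral>\<^sup>+x. Ik dens n (s - x) \<partial>distr M borel (X (Suc n)))"
  proof (intro nn_integral_cong)
    fix x
    have "emeasure (distr M borel S) {a. a + x \<in> {..s}} = emeasure M {\<omega> \<in> space M. S \<omega> \<le> s - x}"
    proof -
      have "S \<in> measurable M borel" by measurable
      moreover have "S -` {a. a + x \<in> {..s}} \<inter> space M = {\<omega> \<in> space M. S \<omega> \<le> s - x}" by auto
      ultimately show ?thesis using emeasure_distr[of S M borel "{a. a + x \<in> {..s}}"] by simp
    qed
    then show "emeasure (distr M borel S) {a. a + x \<in> {..s}} = Ik dens n (s - x)"
      using Suc[of "s - x"] by (simp add: S_def)
  qed
  also have "\<dots> = (\<integral>\<^sup>+\<omega>. Ik dens n (s - X (Suc n) \<omega>) \<partial>M)"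
    by (subst nn_integral_distr) auto
  also have "\<dots> = (\<integral>\<^sup>+x. Ik dens n (s - x) \<partial>distr M lborel (X (Suc n)))"
    by (subst nn_integral_distr) auto
  also have "\<dots> = (\<integral>\<^sup>+x. Ik dens n (s - x) \<partial>density lborel dens)"
    using distributed_distr_eq_density[OF distr] by simp
  also have "\<dots> = (\<integral>\<^sup>+x. dens x * Ik dens n (s - x) \<partial>lborel)"
    by (subst nn_integral_density) auto
  finally show ?case by simp
qed

lemma laplace_pk:
  assumes f0: "f0 \<ge> 0" and r: "r > -1" and mu: "\<mu> > 0"
  shows "(\<integral>\<^sup>+y. pk f0 r y * ennreal (exp (-\<mu> * y)) \<partial>lborel) = ennreal (f0 * Gamma (r + 1) * \<mu> powr (-(r + 1)))"
proof -
  have G: "Gamma (r + 1) = (\<integral>\<^sup>+t. ennreal (indicator {0..} t * t powr r / exp t) \<partial>lborel)"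
    using Gamma_conv_nn_integral_real[of "r + 1"] r by simp
  also have "\<dots> = ennreal \<bar>\<mu>\<bar> * (\<integral>\<^sup>+y. ennreal (indicator {0..} (0 + \<mu> * y) * (0 + \<mu> * y) powr r / exp (0 + \<mu> * y)) \<partial>lborel)"
    using mu by (intro nn_integral_real_affine) auto
  also have "(\<integral>\<^sup>+y. ennreal (indicator {0..} (0 + \<mu> * y) * (0 + \<mu> * y) powr r / exp (0 + \<mu> * y)) \<partial>lborel)
      = (\<integral>\<^sup>+y. ennreal (\<mu> powr r) * pk 1 r y * ennreal (exp (-\<mu> * y)) \<partial>lborel)"
  proof (intro nn_integral_cong)
    fix y :: real
    show "ennreal (indicator {0..} (0 + \<mu> * y) * (0 + \<mu> * y) powr r / exp (0 + \<mu> * y)) = ennreal (\<mu> powr r) * pk 1 r y * ennreal (exp (-\<mu> * y))"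
    proof (cases "y > 0")
      case True
      then show ?thesis using mu
        by (simp add: pk_def powr_mult ennreal_mult' [symmetric] exp_minus field_simps)
    next
      case False
      then have "\<not> (0 < \<mu> * y)" using mu by (simp add: zero_less_mult_iff)
      then have "indicator {0..} (0 + \<mu> * y) * (0 + \<mu> * y) powr r = (0::real)"
        by (cases "\<mu> * y = 0") (auto simp: indicator_def)
      then show ?thesis using False by (simp add: pk_def)
    qed
  qed
  also have "\<dots> = ennreal (\<mu> powr r) * (\<integral>\<^sup>+y. pk 1 r y * ennreal (exp (-\<mu> * y)) \<partial>lborel)"
    by (subst nn_integral_cmult[symmetric]) (auto simp: mult.assoc)
  finally have G2: "ennreal (Gamma (r + 1)) = ennreal (\<mu> * \<mu> powr r) * (\<integral>\<^sup>+y. pk 1 r y * ennreal (exp (-\<mu> * y)) \<partial>lborel)"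
    using mu by (simp add: ennreal_mult' mult.assoc)
  have mpos: "\<mu> * \<mu> powr r > 0" using mu by simp
  have L1: "(\<integral>\<^sup>+y. pk 1 r y * ennreal (exp (- (\<mu> * y))) \<partial>lborel) = ennreal (Gamma (r + 1) / (\<mu> * \<mu> powr r))"
  proof -
    have "ennreal (1 / (\<mu> * \<mu> powr r)) * ennreal (\<mu> * \<mu> powr r) = 1"
      using mpos mu by (simp add: ennreal_mult' [symmetric])
    then have "(\<integral>\<^sup>+y. pk 1 r y * ennreal (exp (- (\<mu> * y))) \<partial>lborel) = ennreal (1 / (\<mu> * \<mu> powr r)) * ennreal (Gamma (r + 1))"
      unfolding G2 using mu by (simp add: mult.assoc [symmetric])
    then show ?thesis using mpos by (simp add: ennreal_mult' [symmetric])
  qed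
  have "(\<integral>\<^sup>+y. pk f0 r y * ennreal (exp (-\<mu> * y)) \<partial>lborel) = (\<integral>\<^sup>+y. ennreal f0 * (pk 1 r y * ennreal (exp (-\<mu> * y))) \<partial>lborel)"
    using f0 by (intro nn_integral_cong) (simp add: pk_def ennreal_mult' mult.assoc)
  also have "\<dots> = ennreal f0 * ennreal (Gamma (r + 1) / (\<mu> * \<mu> powr r))"
    by (subst nn_integral_cmult) (auto simp: L1)
  also have "Gamma (r + 1) / (\<mu> * \<mu> powr r) = Gamma (r + 1) * \<mu> powr (-(r + 1))"
  proof -
    have "\<mu> powr (-(r + 1)) = inverse (\<mu> * \<mu> powr r)"
    proof -
      have "\<mu> powr (r + 1) = \<mu> powr r * \<mu> powr 1" by (rule powr_add)
      then have "\<mu> powr (r + 1) = \<mu> * \<mu> powr r" using mu by simp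
      then show ?thesis by (simp only: powr_minus)
    qed
    then show ?thesis by (simp add: divide_inverse)
  qed
  finally show ?thesis using f0 by (simp add: ennreal_mult' mult.assoc)
qed

lemma Gamma_upper:
  fixes x \<theta> :: real
  assumes x: "x > 0" and th: "0 < \<theta>" "\<theta> < 1"
  shows "Gamma (x + 1) \<le> x powr x * exp (-x) * (1 - \<theta>) powr (-x) / \<theta>"
proof -
  define M where "M = x powr x * exp (-x) * (1 - \<theta>) powr (-x)"
  have Mpos: "M > 0" using x th by (simp add: M_def)
  have pt: "t powr x / exp t \<le> M * exp (-\<theta> * t)" if t: "t > 0" for t
  proof -
    define u where "u = (1 - \<theta>) * t / x"
    have u: "u > 0" using t th x by (simp add: u_def)
    have "ln u \<le> u - 1" using u by (rule ln_le_minus_one)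
    moreover have "ln u = ln (1 - \<theta>) + ln t - ln x"
      using t th x by (simp add: u_def ln_div ln_mult)
    ultimately have "x * (ln (1 - \<theta>) + ln t - ln x) \<le> x * (u - 1)"
      using x by (intro mult_left_mono) auto
    also have "x * (u - 1) = (1 - \<theta>) * t - x" using x by (simp add: u_def field_simps)
    finally have ineq: "x * ln t - t \<le> x * ln x - x - x * ln (1 - \<theta>) - \<theta> * t"
      by (simp add: algebra_simps)
    have "t powr x / exp t = exp (x * ln t - t)"
      using t by (simp add: powr_def exp_diff)
    also have "\<dots> \<le> exp (x * ln x - x - x * ln (1 - \<theta>) - \<theta> * t)"
      using ineq by simp
    also have "\<dots> = M * exp (-\<theta> * t)"
      using x th by (simp add: M_def powr_def exp_diff exp_minus field_simps exp_add)
    finally show ?thesis .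
  qed
  have "ennreal (Gamma (x + 1)) = (\<integral>\<^sup>+t. ennreal (indicator {0..} t * t powr x / exp t) \<partial>lborel)"
    using Gamma_conv_nn_integral_real[of "x + 1"] x by simp
  also have "\<dots> \<le> (\<integral>\<^sup>+t. ennreal M * (pk 1 0 t * ennreal (exp (-\<theta> * t))) \<partial>lborel)"
  proof (intro nn_integral_mono)
    fix t :: real
    show "ennreal (indicator {0..} t * t powr x / exp t) \<le> ennreal M * (pk 1 0 t * ennreal (exp (-\<theta> * t)))"
    proof (cases "t > 0")
      case True
      then show ?thesis using pt[OF True] Mpos by (simp add: pk_def ennreal_mult' [symmetric])
    next
      case False
      have z: "indicator {0..} t * t powr x / exp t = (0::real)"
        using False by (cases "t = 0") (auto simp: indicator_def)
      show ?thesis by (simp only: z ennreal_0 zero_le)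
    qed
  qed
  also have "\<dots> = ennreal M * ennreal (1 * Gamma (0 + 1) * \<theta> powr (-(0 + 1)))"
  proof -
    have L: "(\<integral>\<^sup>+t. pk 1 0 t * ennreal (exp (- (\<theta> * t))) \<partial>lborel) = ennreal (1 / \<theta>)"
      using laplace_pk[of 1 0 \<theta>] th by (simp add: powr_minus divide_inverse)
    show ?thesis using th by (subst nn_integral_cmult) (auto simp: L)
  qed
  also have "\<dots> = ennreal (M / \<theta>)"
    using th Mpos by (simp add: ennreal_mult' [symmetric] powr_minus divide_inverse)
  finally show ?thesis using Mpos th by (simp add: M_def)
qed

lemma tail_limit:
  fixes \<rho> A \<delta> a :: real
  assumes rho: "\<rho> > 0" and A: "A > 0" and d: "0 < \<delta>" "\<delta> \<le> 1/2"
  shows "((\<lambda>n::nat. real n * exp ((a + \<rho> * real n) * (1 - \<delta>)) *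
            (A * (\<rho> * real n) powr (-\<rho>) + exp (-(a + \<rho> * real n) * \<delta>)) ^ (n - 1) *
            Gamma (\<rho> * real n + 1) / A ^ n) \<longlongrightarrow> 0) at_top"
proof -
  define \<theta> where "\<theta> = \<delta> / 2"
  define L where "L = \<delta> + ln (1 - \<theta>)"
  have th: "0 < \<theta>" "\<theta> \<le> 1/4" using d by (auto simp: \<theta>_def)
  have Lpos: "L > 0"
  proof -
    have "- \<theta> - 2 * \<theta>\<^sup>2 \<le> ln (1 - \<theta>)" using th by (intro ln_one_minus_pos_lower_bound) auto
    moreover have "2 * \<theta>\<^sup>2 \<le> \<theta> / 2" using th by (simp add: power2_eq_square)
    ultimately show ?thesis using th by (simp add: L_def \<theta>_def)
  qed
  define C where "C = exp (a * (1 - \<delta>)) / (A * \<theta>)"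
  define B where "B = (\<lambda>n::nat. C * (real n * (\<rho> * real n) powr \<rho> * exp (real n * exp (-(a + \<rho> * real n) * \<delta>) * (\<rho> * real n) powr \<rho> / A) * exp (- \<rho> * L * real n)))"
  have B0: "(B \<longlongrightarrow> 0) at_top"
  proof -
    have "((\<lambda>n::nat. real n * (\<rho> * real n) powr \<rho> * exp (real n * exp (-(a + \<rho> * real n) * \<delta>) * (\<rho> * real n) powr \<rho> / A) * exp (- \<rho> * L * real n)) \<longlongrightarrow> 0) at_top"
      using rho d Lpos A by real_asymp
    then show ?thesis unfolding B_def by (intro tendsto_mult_right_zero)
  qed
  show ?thesis
  proof (rule Lim_null_comparison[OF _ B0])
    show "\<forall>\<^sub>F n in at_top. norm (real n * exp ((a + \<rho> * real n) * (1 - \<delta>)) *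
            (A * (\<rho> * real n) powr (-\<rho>) + exp (-(a + \<rho> * real n) * \<delta>)) ^ (n - 1) *
            Gamma (\<rho> * real n + 1) / A ^ n) \<le> B n"
      using eventually_ge_at_top[of "1::nat"]
    proof eventually_elim
      case (elim n)
      define x where "x = \<rho> * real n"
      have x: "x > 0" using elim rho by (simp add: x_def)
      define E where "E = exp (-(a + x) * \<delta>)"
      define \<beta> where "\<beta> = E * x powr \<rho> / A"
      have \<beta>: "\<beta> \<ge> 0" using A by (simp add: \<beta>_def E_def)
      have G: "Gamma (x + 1) > 0" using x by (intro Gamma_real_pos) simp
      have Gb: "Gamma (x + 1) \<le> x powr x * exp (-x) * (1 - \<theta>) powr (-x) / \<theta>"
        using Gamma_upper[OF x, of \<theta>] th by simp
      have split: "A * x powr (-\<rho>) + E = (A * x powr (-\<rho>)) * (1 + \<beta>)"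
        using A x by (simp add: \<beta>_def powr_minus field_simps)
      have pw: "(1 + \<beta>) ^ (n - 1) \<le> exp (real n * \<beta>)"
      proof -
        have "(1 + \<beta>) ^ (n - 1) \<le> exp \<beta> ^ (n - 1)"
          using \<beta> by (intro power_mono) (auto simp: exp_ge_add_one_self add_increasing)
        also have "\<dots> = exp (real (n - 1) * \<beta>)" by (simp add: exp_of_nat_mult)
        also have "\<dots> \<le> exp (real n * \<beta>)" using \<beta> by (intro exp_mono mult_right_mono) auto
        finally show ?thesis .
      qed
      define K1 where "K1 = real n * exp ((a + x) * (1 - \<delta>)) * (A * x powr (-\<rho>)) ^ (n - 1) / A ^ n"
      have K1: "K1 \<ge> 0" using A x by (simp add: K1_def)
      have "real n * exp ((a + x) * (1 - \<delta>)) * (A * x powr (-\<rho>) + E) ^ (n - 1) * Gamma (x + 1) / A ^ n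
          = K1 * (1 + \<beta>) ^ (n - 1) * Gamma (x + 1)"
        unfolding split K1_def by (simp add: power_mult_distrib)
      also have "\<dots> \<le> K1 * exp (real n * \<beta>) * (x powr x * exp (-x) * (1 - \<theta>) powr (-x) / \<theta>)"
        using K1 G by (intro mult_mono mult_left_mono pw Gb) auto
      also have "\<dots> = B n"
      proof -
        have xr: "(x powr (-\<rho>)) ^ (n - 1) = x powr (- \<rho> * real (n - 1))"
          using powr_power[of x "-\<rho>" "n - 1"] x by (simp add: mult_ac)
        have e1: "- \<rho> * real (n - 1) + x = \<rho>" using elim by (simp add: x_def of_nat_diff algebra_simps)
        have e2: "x powr (- \<rho> * real (n - 1)) * x powr x = x powr \<rho>"
          using e1 by (simp add: powr_add [symmetric])
        have e3: "exp ((a + x) * (1 - \<delta>)) * exp (-x) * (1 - \<theta>) powr (-x) = exp (a * (1 - \<delta>)) * exp (- \<rho> * L * real n)"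
          using th by (simp add: powr_def L_def x_def exp_add [symmetric] exp_diff algebra_simps)
        have e4: "A ^ (n - 1) / A ^ n = 1 / A" using A elim
          by (metis One_nat_def Suc_pred less_le_trans not_one_le_zero power_Suc zero_less_iff_neq_zero nonzero_divide_mult_cancel_left divide_self_if power_not_zero less_numeral_extra(3) mult.commute le_less)
        have "K1 * exp (real n * \<beta>) * (x powr x * exp (-x) * (1 - \<theta>) powr (-x) / \<theta>)
            = real n * (A ^ (n - 1) / A ^ n) * (x powr (- \<rho> * real (n - 1)) * x powr x) * exp (real n * \<beta>)
              * (exp ((a + x) * (1 - \<delta>)) * exp (-x) * (1 - \<theta>) powr (-x)) / \<theta>"
          unfolding K1_def power_mult_distrib xr by (simp add: field_simps)
        also have "\<dots> = B n"
          unfolding e2 e3 e4 by (simp add: B_def C_def \<beta>_def E_def x_def field_simps)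
        finally show ?thesis .
      qed
      finally have "real n * exp ((a + x) * (1 - \<delta>)) * (A * x powr (-\<rho>) + E) ^ (n - 1) * Gamma (x + 1) / A ^ n \<le> B n" .
      moreover have "real n * exp ((a + x) * (1 - \<delta>)) * (A * x powr (-\<rho>) + E) ^ (n - 1) * Gamma (x + 1) / A ^ n \<ge> 0"
        using G A by (simp add: E_def)
      ultimately show ?case by (simp add: x_def E_def)
    qed
  qed
qed

lemma exp_le_quad: fixes u :: real assumes "\<bar>u\<bar> \<le> 1" shows "exp u \<le> 1 + u + u\<^sup>2"
proof (cases "u \<ge> 0")
  case True then show ?thesis using assms exp_bound[of u] by simp
next
  case False
  define v where "v = -u"
  have v: "v > 0" using False by (simp add: v_def)
  have "1 + v \<le> exp v" by (rule exp_ge_add_one_self)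
  then have "exp u \<le> 1 / (1 + v)" using v by (simp add: v_def exp_minus field_simps)
  also have "1 / (1 + v) \<le> 1 - v + v\<^sup>2"
  proof -
    have "(1 + v) * (1 - v + v\<^sup>2) = 1 + v ^ 3" by (simp add: algebra_simps power2_eq_square power3_eq_cube)
    then have "1 \<le> (1 + v) * (1 - v + v\<^sup>2)" using v by simp
    then show ?thesis using v by (simp add: field_simps)
  qed
  finally show ?thesis by (simp add: v_def)
qed

lemma deriv_bounds:
  fixes f :: "real \<Rightarrow> real"
  assumes df: "(f has_real_derivative f'0) (at 0 within {0..})" and f0: "f 0 > 0" and eta: "\<eta> > 0"
  shows "\<exists>\<delta>>0. \<delta> \<le> 1/2 \<and> (\<forall>t. 0 < t \<and> t < \<delta> \<longrightarrow>
            f 0 * exp ((f'0 / f 0 - \<eta>) * t) \<le> f t \<and> f t \<le> f 0 * exp ((f'0 / f 0 + \<eta>) * t))"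
proof -
  define c where "c = f'0 / f 0"
  have lim: "((\<lambda>y. (f y - f 0) / (y - 0)) \<longlongrightarrow> f'0) (at 0 within {0..})"
    using df by (simp add: has_field_derivative_iff)
  have "\<forall>\<^sub>F y in at 0 within {0..}. dist ((f y - f 0) / (y - 0)) f'0 < \<eta> * f 0 / 2"
    using lim eta f0 by (intro tendstoD) auto
  then obtain d1 where d1: "d1 > 0" and d1P: "\<And>y. y \<in> {0..} \<Longrightarrow> y \<noteq> 0 \<Longrightarrow> dist y 0 < d1 \<Longrightarrow>
      dist ((f y - f 0) / (y - 0)) f'0 < \<eta> * f 0 / 2"
    unfolding eventually_at by blast
  define d2 where "d2 = \<eta> / (2 * ((c - \<eta>)\<^sup>2 + 1))"
  define d3 where "d3 = 1 / (\<bar>c - \<eta>\<bar> + 1)"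
  have "(c - \<eta>)\<^sup>2 \<ge> 0" by simp
  then have pos2: "2 * ((c - \<eta>)\<^sup>2 + 1) > 0" by (intro mult_pos_pos) (simp_all add: add_nonneg_pos)
  then have d2: "d2 > 0" using eta unfolding d2_def by (intro divide_pos_pos)
  have d3: "d3 > 0" by (simp add: d3_def add_pos_nonneg)
  define \<delta> where "\<delta> = min (1/2) (min d1 (min d2 d3))"
  have \<delta>: "\<delta> > 0" "\<delta> \<le> 1/2" using d1 d2 d3 by (auto simp: \<delta>_def)
  have main: "f 0 * exp ((c - \<eta>) * t) \<le> f t \<and> f t \<le> f 0 * exp ((c + \<eta>) * t)" if t: "0 < t" "t < \<delta>" for t
  proof -
    have "dist ((f t - f 0) / (t - 0)) f'0 < \<eta> * f 0 / 2"
      using t d1P[of t] by (auto simp: \<delta>_def dist_real_def)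
    then have q: "\<bar>(f t - f 0) / t - f'0\<bar> < \<eta> * f 0 / 2" by (simp add: dist_real_def)
    have "\<bar>f t - f 0 - f'0 * t\<bar> = \<bar>(f t - f 0) / t - f'0\<bar> * t"
      using t by (simp add: field_simps abs_mult_pos' flip: abs_mult)
    then have bnd: "\<bar>f t - f 0 - f'0 * t\<bar> \<le> \<eta> * f 0 / 2 * t"
      using q t by (simp add: mult_right_mono less_imp_le)
    have f'0: "f'0 = c * f 0" using f0 by (simp add: c_def)
    have up: "f t \<le> f 0 * exp ((c + \<eta>) * t)"
    proof -
      have "f 0 * (1 + (c + \<eta>) * t) \<le> f 0 * exp ((c + \<eta>) * t)"
        using f0 by (intro mult_left_mono exp_ge_add_one_self) auto
      moreover have "f t \<le> f 0 * (1 + (c + \<eta>) * t)"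
        using bnd f'0 f0 t eta by (simp add: algebra_simps abs_le_iff) (smt (verit) mult_pos_pos)
      ultimately show ?thesis by linarith
    qed
    have lo: "f 0 * exp ((c - \<eta>) * t) \<le> f t"
    proof -
      define u where "u = (c - \<eta>) * t"
      have tle: "t \<le> d2" "t \<le> d3" using t by (auto simp: \<delta>_def)
      have "\<bar>u\<bar> \<le> 1"
      proof -
        have "\<bar>u\<bar> = \<bar>c - \<eta>\<bar> * t" using t by (simp add: u_def abs_mult)
        also have "\<dots> \<le> (\<bar>c - \<eta>\<bar> + 1) * d3" using tle t by (intro mult_mono) auto
        also have "\<dots> = 1" by (simp add: d3_def add_pos_nonneg)
        finally show ?thesis .
      qed
      then have e: "exp u \<le> 1 + u + u\<^sup>2" by (rule exp_le_quad)
      have "u\<^sup>2 = (c - \<eta>)\<^sup>2 * t * t" by (simp add: u_def power2_eq_square)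
      also have "\<dots> \<le> ((c - \<eta>)\<^sup>2 + 1) * d2 * t"
        using tle t by (intro mult_right_mono mult_mono) auto
      also have "((c - \<eta>)\<^sup>2 + 1) * d2 = \<eta> / 2"
        using pos2 by (simp add: d2_def field_simps)
      finally have u2: "u\<^sup>2 \<le> \<eta> / 2 * t" .
      have "f 0 * exp u \<le> f 0 * (1 + u + \<eta> / 2 * t)"
        using e u2 f0 by (intro mult_left_mono) auto
      also have "\<dots> \<le> f t"
      proof -
        have b2: "f 0 + f'0 * t - f t \<le> \<eta> * f 0 / 2 * t" using bnd abs_ge_minus_self[of "f t - f 0 - f'0 * t"] by linarith
        have "f 0 * (1 + u + \<eta> / 2 * t) = f 0 + f'0 * t - \<eta> * f 0 / 2 * t" by (simp add: u_def f'0 algebra_simps)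
        with b2 show ?thesis by linarith
      qed
      finally show ?thesis by (simp add: u_def)
    qed
    from up lo show ?thesis by simp
  qed
  show ?thesis using \<delta> main unfolding c_def by blast
qed

lemma ennreal_exp_mult2: "ennreal (exp u) * ennreal (exp v) = ennreal (exp (u + v))"
  by (simp add: ennreal_mult' [symmetric] exp_add)

lemma laplace_bound:
  fixes dens :: "real \<Rightarrow> ennreal"
  assumes dm[measurable]: "dens \<in> borel_measurable borel" and supp: "\<And>y. y \<le> 0 \<Longrightarrow> dens y = 0"
    and tot: "(\<integral>\<^sup>+y. dens y \<partial>lborel) \<le> 1"
    and f0: "f0 > 0" and r: "r > -1"
    and cmp: "\<And>y. 0 < y \<Longrightarrow> y < \<delta> \<Longrightarrow> dens y \<le> pk f0 r y * ennreal (exp (a * y))"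
    and lam: "l \<ge> 0" and mu: "l - a > 0"
  shows "(\<integral>\<^sup>+y. dens y * ennreal (exp (-l * y)) \<partial>lborel)
          \<le> ennreal (f0 * Gamma (r + 1) * (l - a) powr (-(r + 1)) + exp (- l * \<delta>))"
proof -
  have "(\<integral>\<^sup>+y. dens y * ennreal (exp (-l * y)) \<partial>lborel)
      \<le> (\<integral>\<^sup>+y. pk f0 r y * ennreal (exp (-(l - a) * y)) + ennreal (exp (- l * \<delta>)) * dens y \<partial>lborel)"
  proof (intro nn_integral_mono)
    fix y
    show "dens y * ennreal (exp (-l * y)) \<le> pk f0 r y * ennreal (exp (-(l - a) * y)) + ennreal (exp (- l * \<delta>)) * dens y"
    proof (cases "y \<le> 0")
      case True then show ?thesis by (simp add: supp)
    next
      case False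
      show ?thesis
      proof (cases "y < \<delta>")
        case True
        have "dens y * ennreal (exp (-l * y)) \<le> pk f0 r y * ennreal (exp (a * y)) * ennreal (exp (-l * y))"
          using cmp[of y] True False by (intro mult_right_mono) auto
        also have "\<dots> = pk f0 r y * ennreal (exp (-(l - a) * y))"
          by (simp add: mult.assoc ennreal_exp_mult2 algebra_simps)
        finally show ?thesis by (simp add: add_increasing2)
      next
        case False
        then have "-l * y \<le> -l * \<delta>" using lam by (simp add: mult_left_mono)
        then have "dens y * ennreal (exp (-l * y)) \<le> ennreal (exp (- l * \<delta>)) * dens y"
          by (simp add: mult.commute mult_left_mono)
        then show ?thesis by (simp add: add_increasing)
      qed
    qed
  qed
  also have "\<dots> = (\<integral>\<^sup>+y. pk f0 r y * ennreal (exp (-(l - a) * y)) \<partial>lborel) + ennreal (exp (- l * \<delta>)) * (\<integral>\<^sup>+y. dens y \<partial>lborel)"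
    by (simp add: nn_integral_add nn_integral_cmult)
  also have "\<dots> \<le> ennreal (f0 * Gamma (r + 1) * (l - a) powr (-(r + 1))) + ennreal (exp (- l * \<delta>)) * 1"
    using laplace_pk[of f0 r "l - a"] f0 r mu tot by (intro add_mono mult_left_mono) auto
  also have "\<dots> = ennreal (f0 * Gamma (r + 1) * (l - a) powr (-(r + 1)) + exp (- l * \<delta>))"
    using f0 r by (simp add: Gamma_real_pos)
  finally show ?thesis .
qed

lemma upper_bound:
  fixes dens :: "real \<Rightarrow> ennreal"
  assumes dm[measurable]: "dens \<in> borel_measurable borel" and supp: "\<And>y. y \<le> 0 \<Longrightarrow> dens y = 0"
    and tot: "(\<integral>\<^sup>+y. dens y \<partial>lborel) \<le> 1"
    and f0: "f0 > 0" and r: "r > -1" and d: "\<delta> > 0" and eta: "0 < \<eta>" "\<eta> < 1"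
    and cmp: "\<And>y. 0 < y \<Longrightarrow> y < \<delta> \<Longrightarrow> dens y \<le> pk f0 r y * ennreal (exp (a * y))"
    and n: "n \<ge> 1" and lam: "a + (r + 1) * real n \<ge> 0"
  shows "enn2real (Ik dens n 1) \<le> exp (a + \<bar>a\<bar> * \<eta>) * Pf f0 r n 1 + exp \<bar>a\<bar> * Pf f0 r n (1 - \<eta>)
      + real n * exp ((a + (r + 1) * real n) * (1 - \<delta>)) *
        (f0 * Gamma (r + 1) * ((r + 1) * real n) powr (-(r + 1)) + exp (-(a + (r + 1) * real n) * \<delta>)) ^ (n - 1)"
proof -
  obtain m where m: "n = Suc m" using n by (cases n) auto
  define l where "l = a + (r + 1) * real n"
  define g where "g = (\<lambda>y. pk f0 r y * ennreal (exp (a * y)))"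
  define h1 where "h1 = (\<lambda>y. dens y * indicator {..<\<delta>} y)"
  define K where "K = (\<integral>\<^sup>+y. dens y * indicator {\<delta>..1} y \<partial>lborel)"
  define \<Phi> where "\<Phi> = f0 * Gamma (r + 1) * ((r + 1) * real n) powr (-(r + 1)) + exp (-(a + (r + 1) * real n) * \<delta>)"
  have Phi0: "\<Phi> \<ge> 0" using f0 r by (simp add: \<Phi>_def Gamma_real_pos)
  have P1: "Pf f0 r n 1 \<ge> 0" "Pf f0 r n (1 - \<eta>) \<ge> 0"
    using f0 r eta by (auto simp: Pf_def Gamma_real_pos intro!: divide_nonneg_pos Gamma_real_pos add_nonneg_pos)
  have s1: "Ik dens n 1 \<le> Ik h1 n 1 + of_nat n * K * Ik dens m (1 - \<delta>)"
    unfolding m h1_def K_def by (rule Ik_split) (use supp in auto)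
  have s2: "Ik h1 n 1 \<le> Ik g n 1"
  proof (rule Ik_mono_h)
    fix y show "h1 y \<le> g y"
    proof (cases "0 < y \<and> y < \<delta>")
      case True then show ?thesis using cmp[of y] by (simp add: h1_def g_def)
    next
      case False
      then have "y \<le> 0 \<or> y \<ge> \<delta>" by auto
      then show ?thesis by (auto simp: h1_def g_def supp indicator_def)
    qed
  qed
  have s3: "Ik g n 1 \<le> ennreal (exp (a + \<bar>a\<bar> * \<eta>)) * ennreal (Pf f0 r n 1) + ennreal (exp \<bar>a\<bar>) * ennreal (Pf f0 r n (1 - \<eta>))"
    using Ik_tilt_upper[of "pk f0 r" \<eta> a n 1] eta by (simp add: g_def pk_supp Ik_pk[OF f0 r])
  have s4: "K \<le> 1"
    using tot unfolding K_def by (rule order.trans[rotated]) (auto intro!: nn_integral_mono simp: indicator_def)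
  have s5: "Ik dens m (1 - \<delta>) \<le> ennreal (exp (l * (1 - \<delta>))) * (\<integral>\<^sup>+y. dens y * ennreal (exp (-l * y)) \<partial>lborel) ^ m"
    using lam unfolding l_def by (intro Ik_chernoff) auto
  have s6: "(\<integral>\<^sup>+y. dens y * ennreal (exp (-l * y)) \<partial>lborel) \<le> ennreal \<Phi>"
  proof -
    have la: "l - a = (r + 1) * real n" by (simp add: l_def)
    have pos: "(r + 1) * real n > 0" using r n by simp
    have L: "(\<integral>\<^sup>+y. dens y * ennreal (exp (-l * y)) \<partial>lborel)
          \<le> ennreal (f0 * Gamma (r + 1) * (l - a) powr (-(r + 1)) + exp (- l * \<delta>))"
      by (rule laplace_bound[OF dm supp tot f0 r]) (use cmp lam pos in \<open>auto simp: l_def\<close>)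
    then show ?thesis unfolding la by (simp add: \<Phi>_def l_def)
  qed
  have "Ik dens n 1 \<le> (ennreal (exp (a + \<bar>a\<bar> * \<eta>)) * ennreal (Pf f0 r n 1) + ennreal (exp \<bar>a\<bar>) * ennreal (Pf f0 r n (1 - \<eta>)))
        + of_nat n * 1 * (ennreal (exp (l * (1 - \<delta>))) * ennreal \<Phi> ^ m)"
    using s1 s2 s3 s4 s5 s6
    by (intro order.trans[OF s1] add_mono order.trans[OF s2 s3] mult_mono order.trans[OF s5] mult_left_mono power_mono) auto
  also have "\<dots> = ennreal (exp (a + \<bar>a\<bar> * \<eta>) * Pf f0 r n 1 + exp \<bar>a\<bar> * Pf f0 r n (1 - \<eta>)
        + real n * exp (l * (1 - \<delta>)) * \<Phi> ^ m)"
    using P1 Phi0 by (simp add: ennreal_mult' [symmetric] ennreal_power ennreal_of_nat_eq_real_of_nat mult.assoc)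
  finally have "enn2real (Ik dens n 1) \<le> exp (a + \<bar>a\<bar> * \<eta>) * Pf f0 r n 1 + exp \<bar>a\<bar> * Pf f0 r n (1 - \<eta>)
        + real n * exp (l * (1 - \<delta>)) * \<Phi> ^ m"
    using P1 Phi0 by (intro enn2real_leI) auto
  then show ?thesis by (simp add: l_def \<Phi>_def m)
qed

lemma lower_bound:
  fixes dens :: "real \<Rightarrow> ennreal"
  assumes dm[measurable]: "dens \<in> borel_measurable borel"
    and fin: "Ik dens n 1 < \<top>"
    and f0: "f0 > 0" and r: "r > -1" and d: "\<delta> > 0" and eta: "0 < \<eta>" "\<eta> < 1"
    and cmp: "\<And>y. 0 < y \<Longrightarrow> y < \<delta> \<Longrightarrow> pk f0 r y * ennreal (exp (a * y)) \<le> dens y"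
    and n: "n \<ge> 1" and lam: "a + (r + 1) * real n \<ge> 0"
  shows "exp (a - \<bar>a\<bar> * \<eta>) * Pf f0 r n 1 - exp \<bar>a\<bar> * Pf f0 r n (1 - \<eta>)
      - exp \<bar>a\<bar> * Pf f0 r 1 1 * (real n * exp ((a + (r + 1) * real n) * (1 - \<delta>)) *
        (f0 * Gamma (r + 1) * ((r + 1) * real n) powr (-(r + 1)) + exp (-(a + (r + 1) * real n) * \<delta>)) ^ (n - 1))
      \<le> enn2real (Ik dens n 1)"
proof -
  obtain m where m: "n = Suc m" using n by (cases n) auto
  define l where "l = a + (r + 1) * real n"
  define g where "g = (\<lambda>y. pk f0 r y * ennreal (exp (a * y)))"
  define h1 where "h1 = (\<lambda>y. g y * indicator {..<\<delta>} y)"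
  define K where "K = (\<integral>\<^sup>+y. g y * indicator {\<delta>..1} y \<partial>lborel)"
  define \<Phi> where "\<Phi> = f0 * Gamma (r + 1) * ((r + 1) * real n) powr (-(r + 1)) + exp (-(a + (r + 1) * real n) * \<delta>)"
  have gm[measurable]: "g \<in> borel_measurable borel" unfolding g_def by measurable
  have gsupp: "\<And>y. y \<le> 0 \<Longrightarrow> g y = 0" by (simp add: g_def pk_supp)
  have Phi0: "\<Phi> \<ge> 0" using f0 r by (simp add: \<Phi>_def Gamma_real_pos)
  have P1: "Pf f0 r n 1 \<ge> 0" "Pf f0 r n (1 - \<eta>) \<ge> 0" "Pf f0 r 1 1 \<ge> 0"
    using f0 r eta by (auto simp: Pf_def Gamma_real_pos intro!: divide_nonneg_pos Gamma_real_pos add_nonneg_pos)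
  have t1: "ennreal (exp (a - \<bar>a\<bar> * \<eta>)) * ennreal (Pf f0 r n 1) \<le> Ik g n 1 + ennreal (exp \<bar>a\<bar>) * ennreal (Pf f0 r n (1 - \<eta>))"
    using Ik_tilt_lower[of "pk f0 r" \<eta> a 1 n] eta by (simp add: g_def pk_supp Ik_pk[OF f0 r])
  have t2: "Ik g n 1 \<le> Ik h1 n 1 + of_nat n * K * Ik g m (1 - \<delta>)"
    unfolding m h1_def K_def by (rule Ik_split) (use gsupp in auto)
  have t3: "Ik h1 n 1 \<le> Ik dens n 1"
  proof (rule Ik_mono_h)
    fix y show "h1 y \<le> dens y"
    proof (cases "0 < y \<and> y < \<delta>")
      case True then show ?thesis using cmp[of y] by (simp add: h1_def g_def)
    next
      case False
      then have "y \<le> 0 \<or> y \<ge> \<delta>" by auto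
      then show ?thesis by (auto simp: h1_def gsupp indicator_def)
    qed
  qed
  have t4: "K \<le> ennreal (exp \<bar>a\<bar> * Pf f0 r 1 1)"
  proof -
    have "K \<le> (\<integral>\<^sup>+y. ennreal (exp \<bar>a\<bar>) * (pk f0 r y * Ik (pk f0 r) 0 (1 - y)) \<partial>lborel)"
      unfolding K_def
    proof (intro nn_integral_mono)
      fix y
      show "g y * indicator {\<delta>..1} y \<le> ennreal (exp \<bar>a\<bar>) * (pk f0 r y * Ik (pk f0 r) 0 (1 - y))"
      proof (cases "\<delta> \<le> y \<and> y \<le> 1")
        case True
        have "a * y \<le> \<bar>a\<bar> * y" using True d by (intro mult_right_mono) auto
        also have "\<dots> \<le> \<bar>a\<bar>" using True by (simp add: mult_left_le)
        finally have ay: "a * y \<le> \<bar>a\<bar>" .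
        have e: "ennreal (exp (a * y)) \<le> ennreal (exp \<bar>a\<bar>)" using ay by (intro ennreal_leI) simp
        have "g y * indicator {\<delta>..1} y = pk f0 r y * ennreal (exp (a * y))" using True by (simp add: g_def indicator_def)
        also have "\<dots> \<le> pk f0 r y * ennreal (exp \<bar>a\<bar>)" by (intro mult_left_mono e) simp
        also have "\<dots> = ennreal (exp \<bar>a\<bar>) * (pk f0 r y * Ik (pk f0 r) 0 (1 - y))" using True by (simp add: mult.commute indicator_def)
        finally show ?thesis .
      next
        case False
        then have "indicator {\<delta>..1} y = (0::ennreal)" by (simp add: indicator_def)
        then show ?thesis by simp
      qed
    qed
    also have "\<dots> = ennreal (exp \<bar>a\<bar>) * Ik (pk f0 r) 1 1"
      by (subst nn_integral_cmult) auto
    also have "\<dots> = ennreal (exp \<bar>a\<bar> * Pf f0 r 1 1)"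
      by (subst Ik_pk[OF f0 r]) (simp add: ennreal_mult')
    finally show ?thesis .
  qed
  have t5: "Ik g m (1 - \<delta>) \<le> ennreal (exp (l * (1 - \<delta>))) * (\<integral>\<^sup>+y. g y * ennreal (exp (-l * y)) \<partial>lborel) ^ m"
    using lam unfolding l_def by (intro Ik_chernoff) auto
  have t6: "(\<integral>\<^sup>+y. g y * ennreal (exp (-l * y)) \<partial>lborel) \<le> ennreal \<Phi>"
  proof -
    have pos: "(r + 1) * real n > 0" using r n by simp
    have "(\<integral>\<^sup>+y. g y * ennreal (exp (-l * y)) \<partial>lborel) = (\<integral>\<^sup>+y. pk f0 r y * ennreal (exp (- ((r + 1) * real n) * y)) \<partial>lborel)"
      by (intro nn_integral_cong) (simp add: g_def mult.assoc ennreal_exp_mult2 l_def algebra_simps)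
    also have "\<dots> = ennreal (f0 * Gamma (r + 1) * ((r + 1) * real n) powr (-(r + 1)))"
      using f0 r pos by (intro laplace_pk) auto
    also have "\<dots> \<le> ennreal \<Phi>" unfolding \<Phi>_def by (intro ennreal_leI) simp
    finally show ?thesis .
  qed
  have "ennreal (exp (a - \<bar>a\<bar> * \<eta>)) * ennreal (Pf f0 r n 1) \<le> (Ik dens n 1 + of_nat n * ennreal (exp \<bar>a\<bar> * Pf f0 r 1 1) * (ennreal (exp (l * (1 - \<delta>))) * ennreal \<Phi> ^ m))
      + ennreal (exp \<bar>a\<bar>) * ennreal (Pf f0 r n (1 - \<eta>))"
    by (intro order.trans[OF t1] add_mono order.trans[OF t2] order.trans[OF t3] mult_mono order.trans[OF t5] mult_left_mono power_mono t3 t4 t6 order.refl) auto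
  also have "\<dots> = Ik dens n 1 + ennreal (exp \<bar>a\<bar> * Pf f0 r 1 1 * (real n * exp (l * (1 - \<delta>)) * \<Phi> ^ m) + exp \<bar>a\<bar> * Pf f0 r n (1 - \<eta>))"
    using P1 Phi0 by (simp add: ennreal_mult' [symmetric] ennreal_power ennreal_of_nat_eq_real_of_nat mult_ac add.assoc)
  also have "\<dots> = ennreal (enn2real (Ik dens n 1) + (exp \<bar>a\<bar> * Pf f0 r 1 1 * (real n * exp (l * (1 - \<delta>)) * \<Phi> ^ m) + exp \<bar>a\<bar> * Pf f0 r n (1 - \<eta>)))"
    using fin P1 Phi0 by (subst ennreal_plus) (auto simp: ennreal_enn2real_if)
  finally have "exp (a - \<bar>a\<bar> * \<eta>) * Pf f0 r n 1 \<le> enn2real (Ik dens n 1) + (exp \<bar>a\<bar> * Pf f0 r 1 1 * (real n * exp (l * (1 - \<delta>)) * \<Phi> ^ m) + exp \<bar>a\<bar> * Pf f0 r n (1 - \<eta>))"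
  proof -
    assume H: "ennreal (exp (a - \<bar>a\<bar> * \<eta>)) * ennreal (Pf f0 r n 1) \<le> ennreal (enn2real (Ik dens n 1) + (exp \<bar>a\<bar> * Pf f0 r 1 1 * (real n * exp (l * (1 - \<delta>)) * \<Phi> ^ m) + exp \<bar>a\<bar> * Pf f0 r n (1 - \<eta>)))"
    have R0: "0 \<le> enn2real (Ik dens n 1) + (exp \<bar>a\<bar> * Pf f0 r 1 1 * (real n * exp (l * (1 - \<delta>)) * \<Phi> ^ m) + exp \<bar>a\<bar> * Pf f0 r n (1 - \<eta>))"
      using P1 Phi0 by (intro add_nonneg_nonneg mult_nonneg_nonneg) auto
    from H have "ennreal (exp (a - \<bar>a\<bar> * \<eta>) * Pf f0 r n 1) \<le> ennreal (enn2real (Ik dens n 1) + (exp \<bar>a\<bar> * Pf f0 r 1 1 * (real n * exp (l * (1 - \<delta>)) * \<Phi> ^ m) + exp \<bar>a\<bar> * Pf f0 r n (1 - \<eta>)))"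
      by (simp add: ennreal_mult')
    then show ?thesis using ennreal_le_iff[OF R0] by blast
  qed
  then show ?thesis by (simp add: l_def \<Phi>_def m)
qed

lemma exp_lim_neg: fixes L :: real assumes "L < 0" shows "((\<lambda>n::nat. exp (L * real n)) \<longlongrightarrow> 0) at_top"
  using assms by real_asymp

lemma powr_lim:
  fixes b \<rho> :: real assumes "0 < b" "b < 1" "\<rho> > 0"
  shows "((\<lambda>n::nat. b powr (\<rho> * real n)) \<longlongrightarrow> 0) at_top"
proof -
  have L: "\<rho> * ln b < 0" using assms by (simp add: mult_pos_neg ln_less_zero)
  have "((\<lambda>n::nat. exp ((\<rho> * ln b) * real n)) \<longlongrightarrow> 0) at_top" using L by (rule exp_lim_neg)
  then show ?thesis using assms by (simp add: powr_def mult_ac)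
qed

theorem corollary5p2:
  fixes M :: "'a measure" and X :: "nat \<Rightarrow> 'a \<Rightarrow> real"
    and k f :: "real \<Rightarrow> real" and r f'0 :: real
  assumes "prob_space M"
    and "prob_space.indep_vars M (\<lambda>_. borel) X UNIV"
    and "\<And>i. distributed M lborel (X i) (\<lambda>t. if t > 0 then ennreal (k t) else 0)"
    and "\<And>t. t > 0 \<Longrightarrow> k t \<ge> 0"
    and "r > -1"
    and "\<And>t. t > 0 \<Longrightarrow> k t = t powr r * f t"
    and "f 0 \<noteq> 0"
    and "(f has_real_derivative f'0) (at 0 within {0..})"
  shows "(\<lambda>n::nat. measure M {\<omega> \<in> space M. (\<Sum>i\<in>{1..n}. X i \<omega>) \<le> 1})
           \<sim>[at_top] (\<lambda>n. (f 0 * Gamma (r + 1)) ^ n * exp (f'0 / f 0)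
                          / Gamma ((r + 1) * real n + 1))"
proof -
  interpret P: prob_space M by fact
  note r = assms(5)
  define dens where "dens = (\<lambda>t::real. if t > 0 then ennreal (k t) else 0)"
  have distr: "\<And>i. distributed M lborel (X i) dens" using assms(3) unfolding dens_def .
  have dm[measurable]: "dens \<in> borel_measurable borel"
    using distributed_borel_measurable[OF distr[of 0]] by simp
  have supp: "\<And>y. y \<le> 0 \<Longrightarrow> dens y = 0" by (simp add: dens_def)
  have tot: "(\<integral>\<^sup>+y. dens y \<partial>lborel) \<le> 1"
  proof -
    have "(\<integral>\<^sup>+y. dens y \<partial>lborel) = emeasure (density lborel dens) UNIV"
      by (simp add: emeasure_density)
    also have "\<dots> = emeasure (distr M lborel (X 0)) UNIV"
      using distributed_distr_eq_density[OF distr[of 0]] by simp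
    also have "\<dots> \<le> 1"
      using distributed_measurable[OF distr[of 0]] by (simp add: emeasure_distr P.emeasure_le_1)
    finally show ?thesis .
  qed
  have Fn: "\<And>n. measure M {\<omega> \<in> space M. (\<Sum>i\<in>{1..n}. X i \<omega>) \<le> 1} = enn2real (Ik dens n 1)"
    by (simp only: measure_def P.prob_Ik[OF assms(2) distr])
  have fin: "\<And>n. Ik dens n 1 < \<top>"
    using P.prob_Ik[OF assms(2) distr] P.emeasure_le_1 by (metis ennreal_one_less_top order.strict_trans1)
  define f0 where "f0 = f 0"
  have f0pos: "f0 > 0"
  proof -
    have "continuous (at 0 within {0..}) f" using assms(8) by (rule DERIV_continuous)
    then have "(f \<longlongrightarrow> f 0) (at 0 within {0..})" by (simp add: continuous_within)
    then have lim: "(f \<longlongrightarrow> f 0) (at_right 0)" by (rule tendsto_within_subset) auto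
    have "\<forall>\<^sub>F t in at_right 0. 0 \<le> f t"
      unfolding eventually_at_right_field
    proof (intro exI[of _ 1] conjI allI impI)
      fix t :: real assume t0: "0 < t" and t1: "t < 1"
      note t = t0 t1
      then have "0 \<le> t powr r * f t" using assms(4)[of t] assms(6)[of t] by simp
      moreover have "t powr r > 0" using t by simp
      ultimately show "0 \<le> f t" by (simp add: zero_le_mult_iff)
    qed simp
    then have "0 \<le> f 0" using lim by (intro tendsto_lowerbound[OF lim]) auto
    then show ?thesis using assms(7) by (simp add: f0_def)
  qed
  define \<rho> where "\<rho> = r + 1"
  have rho: "\<rho> > 0" using r by (simp add: \<rho>_def)
  define A where "A = f0 * Gamma (r + 1)"
  have Apos: "A > 0" using f0pos rho by (simp add: A_def Gamma_real_pos \<rho>_def)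
  define c where "c = f'0 / f0"
  define Q where "Q = (\<lambda>n::nat. A ^ n / Gamma (\<rho> * real n + 1))"
  have Gpos: "\<And>n. Gamma (\<rho> * real n + 1) > 0" using rho by (intro Gamma_real_pos) (simp add: add_nonneg_pos)
  have Qpos: "\<And>n. Q n > 0" using Apos Gpos by (simp add: Q_def)
  have Pf1: "\<And>n. Pf f0 r n 1 = Q n" by (simp add: Pf_pos Q_def A_def \<rho>_def)
  have Pfe: "\<And>n \<eta>. \<eta> < 1 \<Longrightarrow> Pf f0 r n (1 - \<eta>) = (1 - \<eta>) powr (\<rho> * real n) * Q n"
    by (simp add: Pf_pos Q_def A_def \<rho>_def)
  define G where "G = (\<lambda>n::nat. (f 0 * Gamma (r + 1)) ^ n * exp (f'0 / f 0) / Gamma ((r + 1) * real n + 1))"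
  have GQ: "\<And>n. G n = Q n * exp c" by (simp add: G_def Q_def A_def f0_def c_def \<rho>_def)
  define T where "T = (\<lambda>(a::real) (\<delta>::real) (n::nat). real n * exp ((a + \<rho> * real n) * (1 - \<delta>)) *
            (A * (\<rho> * real n) powr (-\<rho>) + exp (-(a + \<rho> * real n) * \<delta>)) ^ (n - 1) *
            Gamma (\<rho> * real n + 1) / A ^ n)"
  have TW: "\<And>a \<delta> n. real n * exp ((a + (r + 1) * real n) * (1 - \<delta>)) *
        (f0 * Gamma (r + 1) * ((r + 1) * real n) powr (-(r + 1)) + exp (-(a + (r + 1) * real n) * \<delta>)) ^ (n - 1)
        = T a \<delta> n * Q n"
  proof -
    fix a \<delta> :: real and n :: nat
    define W where "W = real n * exp ((a + \<rho> * real n) * (1 - \<delta>)) * (A * (\<rho> * real n) powr (-\<rho>) + exp (-(a + \<rho> * real n) * \<delta>)) ^ (n - 1)"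
    have "T a \<delta> n = W * (Gamma (\<rho> * real n + 1) / A ^ n)" by (simp add: T_def W_def)
    then have "T a \<delta> n * Q n = W * ((Gamma (\<rho> * real n + 1) / A ^ n) * (A ^ n / Gamma (\<rho> * real n + 1)))"
      by (simp add: Q_def mult.assoc)
    also have "(Gamma (\<rho> * real n + 1) / A ^ n) * (A ^ n / Gamma (\<rho> * real n + 1)) = 1"
      using Apos Gpos[of n] by simp
    finally show "real n * exp ((a + (r + 1) * real n) * (1 - \<delta>)) *
        (f0 * Gamma (r + 1) * ((r + 1) * real n) powr (-(r + 1)) + exp (-(a + (r + 1) * real n) * \<delta>)) ^ (n - 1)
        = T a \<delta> n * Q n" by (simp add: W_def A_def \<rho>_def)
  qed
  have Tlim: "\<And>a \<delta>. 0 < \<delta> \<Longrightarrow> \<delta> \<le> 1/2 \<Longrightarrow> (T a \<delta> \<longlongrightarrow> 0) at_top"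
    unfolding T_def by (rule tail_limit[OF rho Apos])
  have main: "\<forall>\<^sub>F n in at_top. \<bar>enn2real (Ik dens n 1) / G n - 1\<bar> < \<epsilon>" if eps: "\<epsilon> > 0" for \<epsilon>
  proof -
    define D where "D = \<bar>c\<bar> + 1"
    define \<eta> where "\<eta> = min (1/2) (ln (1 + \<epsilon> / 3) / (1 + D))"
    have D: "D \<ge> 1" by (simp add: D_def)
    have l3: "ln (1 + \<epsilon> / 3) > 0" using eps by simp
    have "ln (1 + \<epsilon> / 3) / (1 + D) > 0" using l3 D by (intro divide_pos_pos) auto
    then have eta: "0 < \<eta>" "\<eta> \<le> 1/2" unfolding \<eta>_def by (simp, simp only: min.cobounded1)
    have eup: "exp ((1 + D) * \<eta>) \<le> 1 + \<epsilon> / 3"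
    proof -
      have "\<eta> \<le> ln (1 + \<epsilon> / 3) / (1 + D)" unfolding \<eta>_def by (rule min.cobounded2)
      then have "(1 + D) * \<eta> \<le> (1 + D) * (ln (1 + \<epsilon> / 3) / (1 + D))" using D by (intro mult_left_mono) auto
      also have "\<dots> = ln (1 + \<epsilon> / 3)" using D by simp
      finally have "(1 + D) * \<eta> \<le> ln (1 + \<epsilon> / 3)" .
      then have "exp ((1 + D) * \<eta>) \<le> exp (ln (1 + \<epsilon> / 3))" by simp
      also have "\<dots> = 1 + \<epsilon> / 3" using eps by simp
      finally show ?thesis .
    qed
    have elo: "exp (- ((1 + D) * \<eta>)) \<ge> 1 - \<epsilon> / 3"
    proof -
      have "exp (- ((1 + D) * \<eta>)) = 1 / exp ((1 + D) * \<eta>)" by (simp add: exp_minus divide_inverse)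
      also have "\<dots> \<ge> 1 / (1 + \<epsilon> / 3)" using eup eps by (intro divide_left_mono) auto
      finally have "exp (- ((1 + D) * \<eta>)) \<ge> 1 / (1 + \<epsilon> / 3)" .
      moreover have "1 / (1 + \<epsilon> / 3) \<ge> 1 - \<epsilon> / 3"
      proof -
        have "(1 - \<epsilon> / 3) * (1 + \<epsilon> / 3) \<le> 1" by (simp add: algebra_simps)
        then show ?thesis using eps by (simp add: field_simps)
      qed
      ultimately show ?thesis by linarith
    qed
    obtain \<delta> where d: "\<delta> > 0" "\<delta> \<le> 1/2" and fb: "\<And>t. 0 < t \<Longrightarrow> t < \<delta> \<Longrightarrow>
        f 0 * exp ((f'0 / f 0 - \<eta>) * t) \<le> f t \<and> f t \<le> f 0 * exp ((f'0 / f 0 + \<eta>) * t)"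
      using deriv_bounds[OF assms(8) f0pos[unfolded f0_def] eta(1)] by blast
    define a where "a = c + \<eta>"
    define a' where "a' = c - \<eta>"
    have aD: "\<bar>a\<bar> \<le> D" "\<bar>a'\<bar> \<le> D" using eta by (auto simp: a_def a'_def D_def)
    have cmp_up: "\<And>y. 0 < y \<Longrightarrow> y < \<delta> \<Longrightarrow> dens y \<le> pk f0 r y * ennreal (exp (a * y))"
    proof -
      fix y :: real assume y: "0 < y" "y < \<delta>"
      have "k y = y powr r * f y" using assms(6) y by simp
      also have "\<dots> \<le> y powr r * (f0 * exp (a * y))"
        using fb[OF y] by (intro mult_left_mono) (auto simp: a_def c_def f0_def)
      finally have "k y \<le> f0 * y powr r * exp (a * y)" by (simp add: mult_ac)
      then show "dens y \<le> pk f0 r y * ennreal (exp (a * y))"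
        using y f0pos by (simp add: dens_def pk_def ennreal_mult' [symmetric] ennreal_leI)
    qed
    have cmp_lo: "\<And>y. 0 < y \<Longrightarrow> y < \<delta> \<Longrightarrow> pk f0 r y * ennreal (exp (a' * y)) \<le> dens y"
    proof -
      fix y :: real assume y: "0 < y" "y < \<delta>"
      have "y powr r * (f0 * exp (a' * y)) \<le> y powr r * f y"
        using fb[OF y] by (intro mult_left_mono) (auto simp: a'_def c_def f0_def)
      also have "\<dots> = k y" using assms(6) y by simp
      finally have "f0 * y powr r * exp (a' * y) \<le> k y" by (simp add: mult_ac)
      then show "pk f0 r y * ennreal (exp (a' * y)) \<le> dens y"
        using y f0pos by (simp add: dens_def pk_def ennreal_mult' [symmetric] ennreal_leI)
    qed
    have b1: "0 < 1 - \<eta>" "1 - \<eta> < 1" using eta by auto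
    have elt1: "\<eta> < 1" using eta by simp
    have lim1: "((\<lambda>n. (1 - \<eta>) powr (\<rho> * real n)) \<longlongrightarrow> 0) at_top" by (rule powr_lim[OF b1 rho])
    define u where "u = (\<lambda>n. exp \<bar>a\<bar> * exp (-c) * (1 - \<eta>) powr (\<rho> * real n) + exp (-c) * T a \<delta> n)"
    define v where "v = (\<lambda>n. exp \<bar>a'\<bar> * exp (-c) * (1 - \<eta>) powr (\<rho> * real n) + exp \<bar>a'\<bar> * Pf f0 r 1 1 * exp (-c) * T a' \<delta> n)"
    have ulim: "(u \<longlongrightarrow> 0) at_top" unfolding u_def
      using lim1 Tlim[OF d, of a] by (auto intro!: tendsto_add_zero tendsto_mult_right_zero)
    have vlim: "(v \<longlongrightarrow> 0) at_top" unfolding v_def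
      using lim1 Tlim[OF d, of a'] by (auto intro!: tendsto_add_zero tendsto_mult_right_zero)
    have ev1: "\<forall>\<^sub>F n in at_top. u n < \<epsilon> / 3" using ulim eps by (intro order_tendstoD) auto
    have ev2: "\<forall>\<^sub>F n in at_top. v n < \<epsilon> / 3" using vlim eps by (intro order_tendstoD) auto
    have ev3: "\<forall>\<^sub>F n in at_top. a + \<rho> * real n \<ge> 0 \<and> a' + \<rho> * real n \<ge> 0 \<and> n \<ge> 1"
    proof -
      have e1: "\<forall>\<^sub>F n in at_top. a + \<rho> * real n \<ge> 0" using rho by real_asymp
      have e2: "\<forall>\<^sub>F n in at_top. a' + \<rho> * real n \<ge> 0" using rho by real_asymp
      show ?thesis using e1 e2 eventually_ge_at_top[of "1::nat"] by (intro eventually_conj) auto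
    qed
    show ?thesis using ev1 ev2 ev3
    proof eventually_elim
      case (elim n)
      have n: "n \<ge> 1" and la: "a + (r + 1) * real n \<ge> 0" and la': "a' + (r + 1) * real n \<ge> 0"
        using elim by (auto simp: \<rho>_def)
      have up: "enn2real (Ik dens n 1) \<le> exp (a + \<bar>a\<bar> * \<eta>) * Q n + exp \<bar>a\<bar> * ((1 - \<eta>) powr (\<rho> * real n) * Q n) + T a \<delta> n * Q n"
        using upper_bound[OF dm supp tot f0pos r d(1) eta(1) _ cmp_up n la] b1
        unfolding TW Pf1 Pfe[OF elt1] by simp
      have lo: "exp (a' - \<bar>a'\<bar> * \<eta>) * Q n - exp \<bar>a'\<bar> * ((1 - \<eta>) powr (\<rho> * real n) * Q n) - exp \<bar>a'\<bar> * Pf f0 r 1 1 * (T a' \<delta> n * Q n) \<le> enn2real (Ik dens n 1)"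
        using lower_bound[OF dm fin f0pos r d(1) eta(1) _ cmp_lo n la'] b1
        unfolding TW Pf1 Pfe[OF elt1] by simp
      have Gp: "G n > 0" using Qpos by (simp add: GQ)
      have "enn2real (Ik dens n 1) / G n \<le> (exp (a + \<bar>a\<bar> * \<eta>) * Q n + exp \<bar>a\<bar> * ((1 - \<eta>) powr (\<rho> * real n) * Q n) + T a \<delta> n * Q n) / G n"
        using up Gp by (intro divide_right_mono) auto
      also have "\<dots> = exp (a + \<bar>a\<bar> * \<eta>) * exp (-c) + u n"
        using Qpos[of n] by (simp add: GQ u_def field_simps exp_minus)
      also have "exp (a + \<bar>a\<bar> * \<eta>) * exp (-c) = exp (\<eta> + \<bar>a\<bar> * \<eta>)"
        by (simp add: a_def flip: exp_add)
      also have "\<dots> \<le> exp ((1 + D) * \<eta>)"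
        using aD eta by (simp add: algebra_simps mult_right_mono)
      finally have U: "enn2real (Ik dens n 1) / G n \<le> exp ((1 + D) * \<eta>) + u n" by simp
      have "exp (a' - \<bar>a'\<bar> * \<eta>) * exp (-c) - v n = (exp (a' - \<bar>a'\<bar> * \<eta>) * Q n - exp \<bar>a'\<bar> * ((1 - \<eta>) powr (\<rho> * real n) * Q n) - exp \<bar>a'\<bar> * Pf f0 r 1 1 * (T a' \<delta> n * Q n)) / G n"
        using Qpos[of n] by (simp add: GQ v_def field_simps exp_minus)
      also have "\<dots> \<le> enn2real (Ik dens n 1) / G n"
        using lo Gp by (intro divide_right_mono) auto
      finally have L0: "exp (a' - \<bar>a'\<bar> * \<eta>) * exp (-c) - v n \<le> enn2real (Ik dens n 1) / G n" .
      have "exp (- ((1 + D) * \<eta>)) \<le> exp (a' - \<bar>a'\<bar> * \<eta>) * exp (-c)"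
      proof -
        have "- ((1 + D) * \<eta>) \<le> a' - \<bar>a'\<bar> * \<eta> + - c"
          using aD eta by (simp add: a'_def algebra_simps mult_right_mono)
        then show ?thesis by (simp flip: exp_add)
      qed
      with L0 have L: "exp (- ((1 + D) * \<eta>)) - v n \<le> enn2real (Ik dens n 1) / G n" by linarith
      show ?case using U L eup elo elim by (simp add: abs_less_iff)
    qed
  qed
  have "((\<lambda>n. enn2real (Ik dens n 1) / G n) \<longlongrightarrow> 1) at_top"
    unfolding tendsto_iff dist_real_def using main by blast
  then have "(\<lambda>n. enn2real (Ik dens n 1)) \<sim>[at_top] G" by (rule asymp_equivI')
  moreover have eqF: "(\<lambda>n::nat. measure M {\<omega> \<in> space M. (\<Sum>i\<in>{1..n}. X i \<omega>) \<le> 1}) = (\<lambda>n. enn2real (Ik dens n 1))"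
    by (rule ext) (rule Fn)
  ultimately show ?thesis unfolding G_def eqF by blast
qed

end
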